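(* Let $0<s_1<s_2$, $m\ge1$, and set $\alpha=\frac1{s_1}+\frac1{s_2}$, $\beta_1=-\frac1{s_1}$, $\beta_2=-\frac1{s_2}$. Then the matrix $A_{2m}^{(\beta_2,0)}(\alpha,\beta_1,\beta_2)$ has no eigenvalue in the interval $\Gamma=\big(\frac2{s_2},\frac2{s_1}\big)$; equivalently, no eigenvalue $\lambda$ with $\lambda-\alpha\in(\beta_1-\beta_2,\beta_2-\beta_1)$.
   Context: $A_{2m}^{(a,b)}(\alpha,\beta_1,\beta_2)\in\mathbb R^{2m\times 2m}$ denotes the symmetric tridiagonal matrix with diagonal entries $(\alpha+a,\alpha,\dots,\alpha,\alpha+b)$ and $(i,i+1)$ off-diagonal entries equal to $\beta_1$ for $i$ odd and $\beta_2$ for $i$ even, $1\le i\le 2m-1$. (Removing the central row and column of the defect capacitance matrix yields a block-diagonal matrix whose blocks are this matrix and its conjugate by the reversal permutation.) *)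

theory Defs
  imports "Jordan_Normal_Form.Char_Poly"
begin

text \<open>The symmetric tridiagonal matrix A_n^{(a,b)}(alpha,beta1,beta2) of size n x n
 (0-based indices): diagonal alpha, with a added to the first and b added to the last
 diagonal entry; the (k,k+1) and (k+1,k) entries are beta1 if k is even (i.e. the
 1-based index k+1 is odd) and beta2 if k is odd.\<close>
definition tridiagA :: "nat \<Rightarrow> real \<Rightarrow> real \<Rightarrow> real \<Rightarrow> real \<Rightarrow> real \<Rightarrow> real mat" where
  "tridiagA n a b alpha beta1 beta2 = mat n n (\<lambda>(i, j).
     if i = j then alpha + (if i = 0 then a else 0) + (if i = n - 1 then b else 0)
     else if j = i + 1 then (if even i then beta1 else beta2)
     else if i = j + 1 then (if even j then beta1 else beta2)
     else 0)"

end

theory Submission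
  imports Defs
begin

definition offd :: "real \<Rightarrow> real \<Rightarrow> nat \<Rightarrow> real" where
  "offd b1 b2 k = (if even k then b1 else b2)"

lemma row_eq:
  assumes i: "i < n" and v: "v \<in> carrier_vec n"
  shows "(tridiagA n a b al b1 b2 *\<^sub>v v) $ i =
     (if 0 < i then offd b1 b2 (i - 1) * v $ (i - 1) else 0)
     + (al + (if i = 0 then a else 0) + (if i = n - 1 then b else 0)) * v $ i
     + (if i + 1 < n then offd b1 b2 i * v $ (i + 1) else 0)"
proof -
  let ?M = "tridiagA n a b al b1 b2"
  have "(?M *\<^sub>v v) $ i = (\<Sum>k = 0..<n. ?M $$ (i, k) * v $ k)"
    using i v by (simp add: tridiagA_def mult_mat_vec_def scalar_prod_def)
  also have "\<dots> = (\<Sum>k = 0..<n. (if k + 1 = i then offd b1 b2 (i - 1) * v $ (i - 1) else 0)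
      + (if k = i then (al + (if i = 0 then a else 0) + (if i = n - 1 then b else 0)) * v $ i else 0)
      + (if k = i + 1 then offd b1 b2 i * v $ (i + 1) else 0))"
    by (rule sum.cong) (auto simp: tridiagA_def i offd_def)
  also have "\<dots> = (if 0 < i then offd b1 b2 (i - 1) * v $ (i - 1) else 0)
     + (al + (if i = 0 then a else 0) + (if i = n - 1 then b else 0)) * v $ i
     + (if i + 1 < n then offd b1 b2 i * v $ (i + 1) else 0)"
  proof -
    have e1: "(\<Sum>k = 0..<n. (if k + 1 = i then offd b1 b2 (i - 1) * v $ (i - 1) else 0))
       = (if 0 < i then offd b1 b2 (i - 1) * v $ (i - 1) else 0)"
    proof (cases "0 < i")
      case True
      have "(\<Sum>k = 0..<n. (if k + 1 = i then offd b1 b2 (i - 1) * v $ (i - 1) else 0))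
         = (\<Sum>k = 0..<n. (if k = i - 1 then offd b1 b2 (i - 1) * v $ (i - 1) else 0))"
        by (rule sum.cong) (use True in auto)
      then show ?thesis using True i by simp
    qed simp
    show ?thesis unfolding sum.distrib e1 using i by (simp add: sum.delta)
  qed
  finally show ?thesis .
qed
lemma step_ineq:
  fixes p q mu x y x' y' :: real
  assumes "0 < q" "q < p" "\<bar>mu\<bar> < p - q" "\<bar>y\<bar> < \<bar>x\<bar>"
    and e1: "q * x' = -(p * x + mu * y)" and e2: "p * y' = -(mu * x' + q * y)"
  shows "\<bar>y'\<bar> < \<bar>x'\<bar>"
proof -
  define c where "c = p - \<bar>mu\<bar>"
  have c: "q < c" using assms c_def by auto
    have "q * \<bar>x'\<bar> = \<bar>q * x'\<bar>" using \<open>0 < q\<close> by (simp add: abs_mult)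
  also have "\<dots> = \<bar>p * x + mu * y\<bar>" unfolding e1 by simp
  also have "\<dots> \<ge> p * \<bar>x\<bar> - \<bar>mu\<bar> * \<bar>y\<bar>" proof -
    have "\<bar>p * x + mu * y\<bar> \<ge> \<bar>p * x\<bar> - \<bar>mu * y\<bar>" using abs_triangle_ineq2[of "p*x" "-(mu*y)"] by simp
    moreover have "\<bar>p * x\<bar> = p * \<bar>x\<bar>" using assms by (simp add: abs_mult)
    moreover have "\<bar>mu * y\<bar> = \<bar>mu\<bar> * \<bar>y\<bar>" by (simp add: abs_mult)
    ultimately show ?thesis by linarith
  qed
  finally have h1: "q * \<bar>x'\<bar> \<ge> p * \<bar>x\<bar> - \<bar>mu\<bar> * \<bar>y\<bar>" .
  have h2: "p * \<bar>x\<bar> - \<bar>mu\<bar> * \<bar>y\<bar> > c * \<bar>y\<bar>"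
  proof -
    have "p * \<bar>y\<bar> < p * \<bar>x\<bar>" using assms by simp
    moreover have "c * \<bar>y\<bar> = p * \<bar>y\<bar> - \<bar>mu\<bar> * \<bar>y\<bar>" by (simp add: c_def left_diff_distrib)
    ultimately show ?thesis by linarith
  qed
  have h3: "q * \<bar>x'\<bar> > c * \<bar>y\<bar>" using h1 h2 by linarith
  have cy: "c * \<bar>y\<bar> \<ge> q * \<bar>y\<bar>" using c by (simp add: mult_right_mono)
  have h4: "q * \<bar>y\<bar> < c * \<bar>x'\<bar>"
  proof -
    have "q * (q * \<bar>y\<bar>) \<le> q * (c * \<bar>y\<bar>)" using cy assms by (simp add: mult_left_mono)
    also have "\<dots> < q * (q * \<bar>x'\<bar>)" using h3 assms by simp
    also have "\<dots> \<le> c * (q * \<bar>x'\<bar>)" using c assms by (simp add: mult_right_mono)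
    finally have "q * (q * \<bar>y\<bar>) < q * (c * \<bar>x'\<bar>)" by (simp add: algebra_simps)
    then show ?thesis using assms by simp
  qed
  have "p * \<bar>y'\<bar> = \<bar>p * y'\<bar>" using \<open>0 < q\<close> \<open>q < p\<close> by (simp add: abs_mult)
  also have "\<dots> = \<bar>mu * x' + q * y\<bar>" unfolding e2 by simp
  also have "\<dots> \<le> \<bar>mu\<bar> * \<bar>x'\<bar> + q * \<bar>y\<bar>" proof -
    have "\<bar>mu * x' + q * y\<bar> \<le> \<bar>mu * x'\<bar> + \<bar>q * y\<bar>" by (rule abs_triangle_ineq)
    moreover have "\<bar>q * y\<bar> = q * \<bar>y\<bar>" using assms by (simp add: abs_mult)
    moreover have "\<bar>mu * x'\<bar> = \<bar>mu\<bar> * \<bar>x'\<bar>" by (simp add: abs_mult)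
    ultimately show ?thesis by linarith
  qed
  also have "\<dots> < \<bar>mu\<bar> * \<bar>x'\<bar> + c * \<bar>x'\<bar>" using h4 by simp
  also have "\<dots> = p * \<bar>x'\<bar>" unfolding c_def by (simp add: algebra_simps)
  finally show ?thesis using assms by simp
qed


theorem mainTheorem6:
  fixes s1 s2 :: real and m :: nat
  assumes "0 < s1" and "s1 < s2" and "1 \<le> m"
  defines "alpha \<equiv> 1 / s1 + 1 / s2"
      and "beta1 \<equiv> - 1 / s1"
      and "beta2 \<equiv> - 1 / s2"
  shows "\<not> (\<exists>lam. eigenvalue (tridiagA (2 * m) beta2 0 alpha beta1 beta2) lam
                 \<and> 2 / s2 < lam \<and> lam < 2 / s1)"
proof
  assume "\<exists>lam. eigenvalue (tridiagA (2 * m) beta2 0 alpha beta1 beta2) lam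
                 \<and> 2 / s2 < lam \<and> lam < 2 / s1"
  then obtain lam v where ev: "eigenvector (tridiagA (2 * m) beta2 0 alpha beta1 beta2) v lam"
    and l1: "2 / s2 < lam" and l2: "lam < 2 / s1"
    unfolding eigenvalue_def by blast
  define M where "M = tridiagA (2 * m) beta2 0 alpha beta1 beta2"
  define p where "p = 1 / s1"
  define q where "q = 1 / s2"
  define mu where "mu = lam - p - q"
  define w where "w k = v $ k" for k
  have q0: "0 < q" using assms by (simp add: q_def)
  have qp: "q < p" using assms by (simp add: q_def p_def frac_less2)
  have mu: "\<bar>mu\<bar> < p - q" using l1 l2 by (simp add: mu_def p_def q_def abs_less_iff)
  have al: "alpha = p + q" and b1: "beta1 = - p" and b2: "beta2 = - q"
    by (simp_all add: alpha_def beta1_def beta2_def p_def q_def)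
  have dimM: "dim_row M = 2 * m" by (simp add: M_def tridiagA_def)
  have vc: "v \<in> carrier_vec (2 * m)" and vnz: "v \<noteq> 0\<^sub>v (2 * m)"
    and eq: "M *\<^sub>v v = lam \<cdot>\<^sub>v v"
    using ev dimM unfolding eigenvector_def M_def by auto
  have row: "(M *\<^sub>v v) $ i = lam * w i" if "i < 2 * m" for i
    using eq that vc by (simp add: w_def)
  have E0: "p * w 0 - p * w 1 = lam * w 0"
  proof -
    have "0 < 2 * m" "1 < 2 * m" "0 \<noteq> 2 * m - 1" using assms by auto
    then show ?thesis using row[of 0] row_eq[OF _ vc, of 0 beta2 0 alpha beta1 beta2]
      by (simp add: M_def w_def offd_def al b1 b2 algebra_simps)
  qed
  have Eodd: "- p * w (2*j) + (p + q) * w (2*j+1) - q * w (2*j+2) = lam * w (2*j+1)"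
    if "j + 1 < m" for j
  proof -
    have "2*j+1 < 2 * m" "2*j+1 \<noteq> 2 * m - 1" "2*j+1+1 < 2*m" using that by auto
    then show ?thesis using row[of "2*j+1"] row_eq[OF _ vc, of "2*j+1" beta2 0 alpha beta1 beta2]
      by (simp add: M_def w_def offd_def al b1 b2 algebra_simps)
  qed
  have Eeven: "- q * w (2*j+1) + (p + q) * w (2*j+2) - p * w (2*j+3) = lam * w (2*j+2)"
    if "j + 1 < m" for j
  proof -
    have "2*j+2 < 2 * m" "2*j+2 \<noteq> 2 * m - 1" "2*j+2+1 < 2*m" using that by auto
    moreover have "offd beta1 beta2 (2*j+2-1) = - q" "offd beta1 beta2 (2*j+2) = - p"
      by (simp_all add: offd_def b1 b2)
    moreover have "(2::nat)*j+2-1 = 2*j+1" "(2::nat)*j+2+1 = 2*j+3" by simp_all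
    ultimately show ?thesis using row[of "2*j+2"] row_eq[OF _ vc, of "2*j+2" beta2 0 alpha beta1 beta2]
      by (simp only: M_def w_def al b1 b2 if_True if_False simp_thms) (simp add: algebra_simps)
  qed
  obtain k where mk: "m = Suc k" using assms by (cases m) auto
  have Elast: "- p * w (2*k) + (p + q) * w (2*k+1) = lam * w (2*k+1)"
  proof -
    have "2*k+1 < 2 * m" "(2*k+1 = 2 * m - 1) = True" "(2*k+1+1 < 2*m) = False" "(0 < 2*k+1) = True"
      "(2*k+1 = 0) = False" using mk by auto
    moreover have "offd beta1 beta2 (2*k+1-1) = - p" by (simp add: offd_def b1)
    moreover have "(2::nat)*k+1-1 = 2*k" by simp
    ultimately show ?thesis using row[of "2*k+1"] row_eq[OF _ vc, of "2*k+1" beta2 0 alpha beta1 beta2]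
      by (simp only: M_def w_def al b1 b2 if_True if_False simp_thms) (simp add: algebra_simps)
  qed
  show False
  proof (cases "w 0 = 0")
    case True
    have "w (2*j) = 0 \<and> w (2*j+1) = 0" if "j < m" for j
      using that
    proof (induction j)
      case 0
      then show ?case using E0 True qp q0 by simp
    next
      case (Suc j)
      then have h: "w (2*j) = 0" "w (2*j+1) = 0" by auto
      have "j + 1 < m" using Suc by simp
      note o = Eodd[OF this] and e = Eeven[OF this]
      have "w (2*j+2) = 0" using o h q0 by simp
      moreover have "w (2*j+3) = 0" using e h q0 qp \<open>w (2*j+2) = 0\<close> by simp
      ultimately show ?case by (simp add: eval_nat_numeral)
    qed
    then have "v = 0\<^sub>v (2 * m)"
    proof -
      assume H: "\<And>j. j < m \<Longrightarrow> w (2*j) = 0 \<and> w (2*j+1) = 0"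
      show ?thesis
      proof (rule eq_vecI)
        show "dim_vec v = dim_vec (0\<^sub>v (2 * m))" using vc by simp
        fix i assume "i < dim_vec (0\<^sub>v (2 * m))"
        then have i: "i < 2 * m" by simp
        have "i = 2 * (i div 2) + i mod 2" by simp
        moreover have "i div 2 < m" using i by simp
        ultimately have "w i = 0" using H[of "i div 2"]
          by (metis mod2_eq_if add_0_right)
        then show "v $ i = 0\<^sub>v (2 * m) $ i" using i by (simp add: w_def)
      qed
    qed
    then show False using vnz by simp
  next
    case False
    have inv: "\<bar>w (2*j+1)\<bar> < \<bar>w (2*j)\<bar>" if "j < m" for j
      using that
    proof (induction j)
      case 0
      have "p * w 1 = -((mu + q) * w 0)" using E0 by (simp add: mu_def algebra_simps)
      then have "p * \<bar>w 1\<bar> = \<bar>mu + q\<bar> * \<bar>w 0\<bar>" using qp q0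
        by (metis abs_minus_cancel abs_mult abs_of_pos less_trans)
      moreover have "\<bar>mu + q\<bar> < p" using mu q0 by (simp add: abs_less_iff)
      moreover have "\<bar>w 0\<bar> > 0" using False by simp
      ultimately have "p * \<bar>w 1\<bar> < p * \<bar>w 0\<bar>" by (simp add: mult_strict_right_mono)
      then show ?case using q0 qp by simp
    next
      case (Suc j)
      then have h: "\<bar>w (2*j+1)\<bar> < \<bar>w (2*j)\<bar>" by auto
      have "j + 1 < m" using Suc by simp
      note o = Eodd[OF this] and e = Eeven[OF this]
      have e1: "q * w (2*j+2) = -(p * w (2*j) + mu * w (2*j+1))" using o by (simp add: mu_def algebra_simps)
      have e2: "p * w (2*j+3) = -(mu * w (2*j+2) + q * w (2*j+1))" using e by (simp add: mu_def algebra_simps)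
      have "\<bar>w (2*j+3)\<bar> < \<bar>w (2*j+2)\<bar>" by (rule step_ineq[OF q0 qp mu h e1 e2])
      then show ?case by (simp add: eval_nat_numeral)
    qed
    have h: "\<bar>w (2*k+1)\<bar> < \<bar>w (2*k)\<bar>" using inv[of k] mk by simp
    have "p * w (2*k) = - (mu * w (2*k+1))" using Elast by (simp add: mu_def algebra_simps)
    then have "p * \<bar>w (2*k)\<bar> = \<bar>mu\<bar> * \<bar>w (2*k+1)\<bar>" using qp q0
      by (metis abs_minus_cancel abs_mult abs_of_pos less_trans)
    moreover have "\<bar>mu\<bar> * \<bar>w (2*k+1)\<bar> \<le> \<bar>mu\<bar> * \<bar>w (2*k)\<bar>" using h by (simp add: mult_left_mono)
    moreover have "\<bar>mu\<bar> * \<bar>w (2*k)\<bar> < p * \<bar>w (2*k)\<bar>" using mu q0 h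
      by (intro mult_strict_right_mono) auto
    ultimately show False by linarith
  qed
qed

end
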